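(* Let $r_0,\dots,r_{f-1}$ be integers in $[1,p]$, let $J\subset\{0,\dots,f-1\}$, and set $h_i=r_i$ if $i\in J$, $h_i=0$ if $i\notin J$. Fix $a,b\in k_E^\times$. Let $\overline{\mathfrak M}$ be an extension of $\overline{\mathfrak M}(h_0,\dots,h_{f-1};a)$ by $\overline{\mathfrak M}(r_0-h_0,\dots,r_{f-1}-h_{f-1};b)$. Then one can choose $k_E[[u]]$-bases $e_i,f_i$ of $\overline{\mathfrak M}_i$ such that $$\varphi(e_{i-1})=(b)_iu^{r_i-h_i}e_i,\qquad\varphi(f_{i-1})=(a)_iu^{h_i}f_i+x_ie_i$$ with each $x_i\in k_E[[u]]$ a polynomial of degree $<h_i$, except in the following cases: (i) $(r_0,\dots,r_{f-1})\in\mathcal P$, $J=\{i: r_{i-1}\ne p\}$ and $a=b$; or (ii) $p=2$, $(r_0,\dots,r_{f-1})=(2,\dots,2)$, $J=\{0,\dots,f-1\}$ and $a=b$. In these exceptional cases, for any fixed $i_0\in J$, the $x_i$ may be taken to be polynomials of degree $<h_i$ for all $i\ne i_0$, and $x_{i_0}$ the sum of a polynomial of degree $<h_{i_0}$ and a (possibly zero) monomial of degree $p$ (in case (i)) or degree $4$ (in case (ii)).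
   Context: $K/\mathbb Q_p$ is unramified of degree $f$ with residue field $k$, $\mathfrak S=W(k)[[u]]$ with Frobenius $\varphi$ (Witt Frobenius, $u\mapsto u^p$). $E$ is a finite extension of $\mathbb Q_p$ containing all embeddings of $K$, with integers $\mathcal O_E$ and residue field $k_E$. Fix $\kappa_0\colon K\hookrightarrow E$, $\kappa_{s+1}^p\equiv\kappa_s\pmod p$ (indices mod $f$); $\varepsilon_s\in W(k)\otimes_{\mathbb Z_p}\mathcal O_E$ is the idempotent with $(x\otimes1)\varepsilon_s=(1\otimes\kappa_s(x))\varepsilon_s$, and $M_s=\varepsilon_sM$, so $\mathfrak S\otimes_{\mathbb Z_p}k_E=\prod_sk_E[[u]]$ and $\varphi$ maps the $(s-1)$-component to the $s$-component. For integers $r_i\ge0$ and $a\in k_E^\times$, $\overline{\mathfrak M}(r_0,\dots,r_{f-1};a)$ is the free rank one $\mathfrak S\otimes_{\mathbb Z_p}k_E$-module with semilinear $\varphi$ such that the $i$-th component is generated by $e_i$ and $\varphi(e_{i-1})=(a)_iu^{r_i}e_i$, where $(a)_i=a$ if $i\equiv0\pmod f$ and $(a)_i=1$ otherwise. An extension of $\mathfrak A$ by $\mathfrak B$ is a short exact sequence $0\to\mathfrak B\to\overline{\mathfrak M}\to\mathfrak A\to0$ of $\mathfrak S\otimes k_E$-modules with $k_E$-linear semilinear $\varphi$. $\mathcal P$ is the set of $f$-tuples $(r_0,\dots,r_{f-1})$ with $r_i\in\{1,p-1,p\}$ such that (indices mod $f$) $r_i=p\Rightarrow r_{i+1}=1$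 and $r_i\in\{1,p-1\}\Rightarrow r_{i+1}\in\{p-1,p\}$. *)

theory Defs
  imports Main "HOL-Computational_Algebra.Formal_Power_Series"
begin

text \<open>Indices are taken in {0..<f}; the predecessor of i is (i-1) mod f.\<close>
definition prv :: "nat \<Rightarrow> nat \<Rightarrow> nat" where
  "prv f i = (i + f - 1) mod f"

definition coefi :: "'k::one \<Rightarrow> nat \<Rightarrow> 'k" where
  "coefi a i = (if i = 0 then a else 1)"

text \<open>Frobenius on k_E[[u]] (from the (s-1)-component to the s-component):
  k_E-linear, u maps to u^p.\<close>
definition frob :: "nat \<Rightarrow> 'k::zero fps \<Rightarrow> 'k fps" where
  "frob p g = Abs_fps (\<lambda>n. if p dvd n then fps_nth g (n div p) else 0)"

text \<open>Frobenius of the rank-one module M(r_0,...,r_{f-1}; a) in coordinates w.r.t. the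
  basis (e_i): phi(g e_{i-1}) = frob(g) (a)_i u^{r_i} e_i.\<close>
definition phiR :: "nat \<Rightarrow> (nat \<Rightarrow> nat) \<Rightarrow> 'k::field \<Rightarrow> nat \<Rightarrow> 'k fps \<Rightarrow> 'k fps" where
  "phiR p r a i g = fps_const (coefi a i) * fps_X ^ (r i) * frob p g"

definition Pset :: "nat \<Rightarrow> nat \<Rightarrow> (nat \<Rightarrow> nat) set" where
  "Pset p f = {r. \<forall>i<f. r i \<in> {1, p - 1, p}
       \<and> (r i = p \<longrightarrow> r (Suc i mod f) = 1)
       \<and> (r i \<in> {1, p - 1} \<longrightarrow> r (Suc i mod f) \<in> {p - 1, p})}"

definition deg_less :: "'k::zero fps \<Rightarrow> nat \<Rightarrow> bool" where
  "deg_less x d \<longleftrightarrow> (\<forall>n\<ge>d. fps_nth x n = 0)"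

text \<open>An extension 0 -> B -> M -> A -> 0 with B = M(rB; b), A = M(rA; a), given componentwise:
  M_i = M i (submodules of an ambient k_E[[u]]-module, scalar multiplication scale),
  phi i : M_{i-1} -> M_i additive and frob-semilinear, iota i : B_i = k_E[[u]] -> M_i,
  prj i : M_i -> A_i = k_E[[u]] (coordinates w.r.t. the standard generators e_i of B, A),
  exact and compatible with phi.\<close>
definition is_extension ::
  "nat \<Rightarrow> nat \<Rightarrow> (nat \<Rightarrow> nat) \<Rightarrow> 'k::field \<Rightarrow> (nat \<Rightarrow> nat) \<Rightarrow> 'k
   \<Rightarrow> ('k fps \<Rightarrow> 'm::ab_group_add \<Rightarrow> 'm) \<Rightarrow> (nat \<Rightarrow> 'm set) \<Rightarrow> (nat \<Rightarrow> 'm \<Rightarrow> 'm)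
   \<Rightarrow> (nat \<Rightarrow> 'k fps \<Rightarrow> 'm) \<Rightarrow> (nat \<Rightarrow> 'm \<Rightarrow> 'k fps) \<Rightarrow> bool" where
  "is_extension p f rA a rB b scale M phi iota prj \<longleftrightarrow>
     module scale \<and>
     (\<forall>i<f. module.subspace scale (M i)) \<and>
     (\<forall>i<f. \<forall>x\<in>M (prv f i). phi i x \<in> M i) \<and>
     (\<forall>i<f. \<forall>x\<in>M (prv f i). \<forall>y\<in>M (prv f i). phi i (x + y) = phi i x + phi i y) \<and>
     (\<forall>i<f. \<forall>c. \<forall>x\<in>M (prv f i). phi i (scale c x) = scale (frob p c) (phi i x)) \<and>
     (\<forall>i<f. module_hom (*) scale (iota i) \<and> inj (iota i) \<and> range (iota i) \<subseteq> M i) \<and>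
     (\<forall>i<f. (\<forall>x\<in>M i. \<forall>y\<in>M i. prj i (x + y) = prj i x + prj i y) \<and>
            (\<forall>c. \<forall>x\<in>M i. prj i (scale c x) = c * prj i x) \<and>
            prj i ` M i = UNIV \<and> {x \<in> M i. prj i x = 0} = range (iota i)) \<and>
     (\<forall>i<f. \<forall>g. phi i (iota (prv f i) g) = iota i (phiR p rB b i g)) \<and>
     (\<forall>i<f. \<forall>x\<in>M (prv f i). prj i (phi i x) = phiR p rA a i (prj (prv f i) x))"

definition good_bases ::
  "nat \<Rightarrow> nat \<Rightarrow> (nat \<Rightarrow> nat) \<Rightarrow> 'k::field \<Rightarrow> (nat \<Rightarrow> nat) \<Rightarrow> 'k
   \<Rightarrow> ('k fps \<Rightarrow> 'm::ab_group_add \<Rightarrow> 'm) \<Rightarrow> (nat \<Rightarrow> 'm set) \<Rightarrow> (nat \<Rightarrow> 'm \<Rightarrow> 'm)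
   \<Rightarrow> (nat \<Rightarrow> 'k fps \<Rightarrow> 'm) \<Rightarrow> (nat \<Rightarrow> 'm) \<Rightarrow> (nat \<Rightarrow> 'm) \<Rightarrow> (nat \<Rightarrow> 'k fps) \<Rightarrow> bool" where
  "good_bases p f rA a rB b scale M phi iota e fb x \<longleftrightarrow>
     (\<forall>i<f. e i \<in> M i \<and> fb i \<in> M i \<and>
        (\<forall>m\<in>M i. \<exists>!cd. m = scale (fst cd) (e i) + scale (snd cd) (fb i)) \<and>
        range (iota i) = range (\<lambda>c. scale c (e i)) \<and>
        phi i (e (prv f i)) = scale (fps_const (coefi b i) * fps_X ^ rB i) (e i) \<and>
        phi i (fb (prv f i)) = scale (fps_const (coefi a i) * fps_X ^ rA i) (fb i)
                               + scale (x i) (e i))"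

end

theory Submission
  imports Defs
begin


fun itr :: "('n \<Rightarrow> 'n option) \<Rightarrow> nat \<Rightarrow> 'n \<Rightarrow> 'n option" where
  "itr G 0 n = Some n"
| "itr G (Suc t) n = (case G n of None \<Rightarrow> None | Some m \<Rightarrow> itr G t m)"

lemma itr_add: "itr G (s + t) n = Option.bind (itr G s n) (itr G t)"
  by (induction s arbitrary: n) (auto split: option.split)

lemma itr_one: "itr G (Suc 0) n = G n"
  by (auto split: option.split)

lemma itr_Suc2: "itr G (Suc t) n = Option.bind (itr G t n) G"
proof -
  have "itr G (Suc 0) = G" by (rule ext) (simp split: option.split)
  then show ?thesis using itr_add[of G t "Suc 0" n] by simp
qed

lemma itr_prefix: "itr G t n \<noteq> None \<Longrightarrow> s \<le> t \<Longrightarrow> itr G s n \<noteq> None"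
  using itr_add[of G s "t - s" n] by (cases "itr G s n") auto

fun V :: "('n \<Rightarrow> 'n option) \<Rightarrow> ('n \<Rightarrow> 'k::field) \<Rightarrow> ('n \<Rightarrow> 'k) \<Rightarrow> nat \<Rightarrow> 'n \<Rightarrow> 'k" where
  "V G c \<beta> 0 n = 0"
| "V G c \<beta> (Suc N) n = c n + \<beta> n * (case G n of None \<Rightarrow> 0 | Some m \<Rightarrow> V G c \<beta> N m)"

lemma V_Suc2: "itr G N m \<noteq> None \<Longrightarrow>
  V G c \<beta> (Suc N) m = V G c \<beta> N m + (\<Prod>l<N. \<beta> (the (itr G l m))) * c (the (itr G N m))"
proof (induction N arbitrary: m)
  case 0
  then show ?case by (auto split: option.split)
next
  case (Suc N)
  then obtain m' where m': "G m = Some m'" and nn: "itr G N m' \<noteq> None"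
    by (auto split: option.splits)
  have "V G c \<beta> (Suc (Suc N)) m = c m + \<beta> m * V G c \<beta> (Suc N) m'" using m' by simp
  also have "\<dots> = c m + \<beta> m * (V G c \<beta> N m' + (\<Prod>l<N. \<beta> (the (itr G l m'))) * c (the (itr G N m')))"
    using Suc.IH[OF nn] by simp
  also have "\<dots> = V G c \<beta> (Suc N) m + (\<beta> m * (\<Prod>l<N. \<beta> (the (itr G l m')))) * c (the (itr G N m'))"
    using m' by (simp add: algebra_simps)
  also have "\<beta> m * (\<Prod>l<N. \<beta> (the (itr G l m'))) = (\<Prod>l<Suc N. \<beta> (the (itr G l m)))"
    using m' by (simp add: prod.lessThan_Suc_shift del: prod.lessThan_Suc)
  also have "itr G N m' = itr G (Suc N) m" using m' by simp
  finally show ?case .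
qed

fun W :: "('n \<Rightarrow> bool) \<Rightarrow> ('n \<Rightarrow> 'k) \<Rightarrow> ('n \<Rightarrow> 'n option) \<Rightarrow> ('n \<Rightarrow> 'k) \<Rightarrow> ('n \<Rightarrow> 'k) \<Rightarrow> nat \<Rightarrow> 'n \<Rightarrow> 'k::field" where
  "W cy Z G c \<beta> 0 n = Z n"
| "W cy Z G c \<beta> (Suc N) n = (if cy n then Z n else c n + \<beta> n * (case G n of None \<Rightarrow> 0 | Some m \<Rightarrow> W cy Z G c \<beta> N m))"

lemma W_cy: "cy n \<Longrightarrow> W cy Z G c \<beta> N n = Z n"
  by (cases N) auto

lemma W_stab: "itr G t n = None \<or> (\<exists>u. itr G t n = Some u \<and> cy u) \<Longrightarrow>
   \<exists>N. \<forall>M\<ge>N. W cy Z G c \<beta> M n = W cy Z G c \<beta> N n"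
proof (induction t arbitrary: n)
  case 0
  then have "cy n" by auto
  then show ?case by (intro exI[of _ 0] allI impI) (simp add: W_cy)
next
  case (Suc t)
  show ?case
  proof (cases "cy n")
    case True
    then show ?thesis by (intro exI[of _ 0] allI impI) (simp add: W_cy)
  next
    case False
    show ?thesis
    proof (cases "G n")
      case None
      have "\<forall>M\<ge>Suc 0. W cy Z G c \<beta> M n = W cy Z G c \<beta> (Suc 0) n"
      proof (intro allI impI)
        fix M assume "Suc 0 \<le> M"
        then obtain M' where "M = Suc M'" by (cases M) auto
        then show "W cy Z G c \<beta> M n = W cy Z G c \<beta> (Suc 0) n" using False None by simp
      qed
      then show ?thesis by blast
    next
      case (Some m)
      with Suc.prems have "itr G t m = None \<or> (\<exists>u. itr G t m = Some u \<and> cy u)" by simp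
      from Suc.IH[OF this] obtain N where N: "\<forall>M\<ge>N. W cy Z G c \<beta> M m = W cy Z G c \<beta> N m" by blast
      have "\<forall>M\<ge>Suc N. W cy Z G c \<beta> M n = W cy Z G c \<beta> (Suc N) n"
      proof (intro allI impI)
        fix M assume "Suc N \<le> M"
        then obtain M' where "M = Suc M'" "N \<le> M'" by (cases M) auto
        then show "W cy Z G c \<beta> M n = W cy Z G c \<beta> (Suc N) n" using N[rule_format, of M'] False Some by simp
      qed
      then show ?thesis by blast
    qed
  qed
qed

lemma solver:
  fixes G :: "'n \<Rightarrow> 'n option" and c \<beta> :: "'n \<Rightarrow> 'k::field"
  assumes F: "F > 0"
    and fin: "\<And>n. (\<exists>t. itr G t n = None) \<or> (\<exists>t u. itr G t n = Some u \<and> itr G F u = Some u)"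
    and lam: "\<And>u. itr G F u = Some u \<Longrightarrow> (\<Prod>l<F. \<beta> (the (itr G l u))) \<noteq> 1"
  shows "\<exists>y. \<forall>n. y n = c n + \<beta> n * (case G n of None \<Rightarrow> 0 | Some m \<Rightarrow> y m)"
proof -
  define cy where "cy u \<longleftrightarrow> itr G F u = Some u" for u
  define la where "la u = (\<Prod>l<F. \<beta> (the (itr G l u)))" for u
  define Z where "Z u = (if cy u then V G c \<beta> F u / (1 - la u) else 0)" for u
  define WW where "WW = W cy Z G c \<beta>"
  have stab: "\<exists>N. \<forall>M\<ge>N. WW M n = WW N n" for n
  proof -
    from fin[of n] obtain t where "itr G t n = None \<or> (\<exists>u. itr G t n = Some u \<and> cy u)"
      unfolding cy_def by blast
    from W_stab[OF this] show ?thesis unfolding WW_def by blast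
  qed
  define S where "S n = (SOME N. \<forall>M\<ge>N. WW M n = WW N n)" for n
  have S: "\<forall>M\<ge>S n. WW M n = WW (S n) n" for n
    unfolding S_def by (rule someI_ex[OF stab])
  define y where "y n = WW (S n) n" for n
  have cyc_step: "G u = Some m \<and> cy m \<and> la m = la u \<and>
      V G c \<beta> F u = c u + \<beta> u * V G c \<beta> (F - 1) m \<and>
      V G c \<beta> F m = V G c \<beta> (F - 1) m + (\<Prod>l<F-1. \<beta> (the (itr G l m))) * c u \<and>
      la u = \<beta> u * (\<Prod>l<F-1. \<beta> (the (itr G l m)))"
    if cu: "cy u" and Gu: "G u = Some m" for u m
  proof -
    have FF: "F = Suc (F - 1)" using F by simp
    have i1: "itr G (F - 1) m = Some u" using cu Gu FF unfolding cy_def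
      by (metis itr.simps(2) option.simps(5))
    have cm: "cy m" unfolding cy_def using itr_Suc2[of G "F - 1" m] i1 Gu FF by simp
    have V1: "V G c \<beta> F u = c u + \<beta> u * V G c \<beta> (F - 1) m"
      using Gu FF by (metis V.simps(2) option.simps(5))
    have V2: "V G c \<beta> F m = V G c \<beta> (F - 1) m + (\<Prod>l<F-1. \<beta> (the (itr G l m))) * c u"
      using V_Suc2[of G "F - 1" m c \<beta>] i1 FF by simp
    have L1: "la u = \<beta> u * (\<Prod>l<F-1. \<beta> (the (itr G l m)))"
      unfolding la_def using Gu by (subst FF) (simp add: prod.lessThan_Suc_shift del: prod.lessThan_Suc)
    have L2: "la m = (\<Prod>l<F-1. \<beta> (the (itr G l m))) * \<beta> u"
      unfolding la_def using i1 by (subst FF) (simp add: prod.lessThan_Suc)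
    show ?thesis using Gu cm V1 V2 L1 L2 by (simp add: mult.commute)
  qed
  have "y n = c n + \<beta> n * (case G n of None \<Rightarrow> 0 | Some m \<Rightarrow> y m)" for n
  proof (cases "cy n")
    case True
    have yn: "y n = Z n" unfolding y_def WW_def using True by (simp add: W_cy)
    obtain m where Gn: "G n = Some m"
    proof (cases "G n")
      case None
      have "itr G F n = None" using F None by (cases F) auto
      then show ?thesis using True unfolding cy_def by simp
    qed
    note cs = cyc_step[OF True Gn]
    have ym: "y m = Z m" unfolding y_def WW_def using cs by (simp add: W_cy)
    have l1: "la n \<noteq> 1" using lam True unfolding cy_def la_def by blast
    define P where "P = (\<Prod>l<F-1. \<beta> (the (itr G l m)))"
    have "Z n = c n + \<beta> n * Z m"
      using cs l1 True unfolding Z_def P_def[symmetric]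
      by (auto simp: field_simps)
    then show ?thesis using yn ym Gn by simp
  next
    case False
    show ?thesis
    proof (cases "G n")
      case None
      have "y n = WW (max (S n) 1) n" unfolding y_def using S[of n, rule_format, of "max (S n) 1"] by simp
      also have "\<dots> = c n" unfolding WW_def using False None
        by (cases "max (S n) 1") auto
      finally show ?thesis using None by simp
    next
      case (Some m)
      have "y n = WW (max (S n) (Suc (S m))) n" unfolding y_def using S[of n, rule_format, of "max (S n) (Suc (S m))"] by simp
      also have "\<dots> = c n + \<beta> n * WW (max (S n - 1) (S m)) m"
      proof -
        have "max (S n) (Suc (S m)) = Suc (max (S n - 1) (S m))" by arith
        then show ?thesis unfolding WW_def using False Some by simp
      qed
      also have "WW (max (S n - 1) (S m)) m = y m" unfolding y_def using S[of m, rule_format, of "max (S n - 1) (S m)"] by simp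
      finally show ?thesis using Some by simp
    qed
  qed
  then show ?thesis by blast
qed

lemma itr_sub: "(\<And>n. G' n \<noteq> None \<Longrightarrow> G' n = G n) \<Longrightarrow> itr G' t n \<noteq> None \<Longrightarrow> itr G' t n = itr G t n"
  by (induction t arbitrary: n) (auto split: option.splits)

lemma fin_sub:
  assumes sub: "\<And>n. G' n \<noteq> None \<Longrightarrow> G' n = G n"
    and fin: "(\<exists>t. itr G t n = None) \<or> (\<exists>t u. itr G t n = Some u \<and> itr G F u = Some u)"
  shows "(\<exists>t. itr G' t n = None) \<or> (\<exists>t u. itr G' t n = Some u \<and> itr G' F u = Some u)"
  using fin
proof
  have key: "itr G' t m \<noteq> None \<Longrightarrow> itr G' t m = itr G t m" for t m by (rule itr_sub[OF sub])
  assume "\<exists>t. itr G t n = None"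
  then obtain t where "itr G t n = None" by blast
  then have "itr G' t n = None" using key[of t n] by (cases "itr G' t n") auto
  then show ?thesis by blast
next
  have key: "itr G' t m \<noteq> None \<Longrightarrow> itr G' t m = itr G t m" for t m by (rule itr_sub[OF sub])
  assume "\<exists>t u. itr G t n = Some u \<and> itr G F u = Some u"
  then obtain t u where tu: "itr G t n = Some u" "itr G F u = Some u" by blast
  show ?thesis
  proof (cases "itr G' t n")
    case None then show ?thesis by blast
  next
    case (Some u')
    then have u': "u' = u" using key[of t n] tu by auto
    show ?thesis
    proof (cases "itr G' F u")
      case None
      then have "itr G' (t + F) n = None" using itr_add[of G' t F n] Some u' by simp
      then show ?thesis by blast
    next
      case (Some w)
      then have "w = u" using key[of F u] tu by auto
      then show ?thesis using Some \<open>itr G' t n = Some u'\<close> u' by blast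
    qed
  qed
qed




lemma prv_lt: "i < f \<Longrightarrow> prv f i < f"
  unfolding prv_def by simp

lemma prv_pos: "0 < m \<Longrightarrow> m < f \<Longrightarrow> prv f m = m - 1"
proof -
  assume "0 < m" "m < f"
  then have e: "m + f - 1 = (m - 1) + f" by simp
  have "(m - 1 + f) mod f = m - 1" using \<open>m < f\<close> by simp
  then show ?thesis unfolding prv_def e .
qed

lemma prv_zero: "0 < f \<Longrightarrow> prv f 0 = f - 1"
  unfolding prv_def by simp

lemma prv_pow: "i < f \<Longrightarrow> l < f \<Longrightarrow> (prv f ^^ l) i = (if l \<le> i then i - l else f + i - l)"
proof (induction l)
  case 0
  then show ?case by simp
next
  case (Suc l)
  then have IH: "(prv f ^^ l) i = (if l \<le> i then i - l else f + i - l)" by simp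
  show ?case
  proof (cases "Suc l \<le> i")
    case True
    then show ?thesis using IH Suc.prems by (simp add: prv_pos)
  next
    case False
    show ?thesis
    proof (cases "l = i")
      case True
      then show ?thesis using IH Suc.prems by (simp add: prv_zero)
    next
      case False
      then have "l > i" using \<open>\<not> Suc l \<le> i\<close> by simp
      then show ?thesis using IH Suc.prems by (simp add: prv_pos)
    qed
  qed
qed

lemma prv_pow_f: "i < f \<Longrightarrow> (prv f ^^ f) i = i"
proof -
  assume i: "i < f"
  then have f0: "f = Suc (f - 1)" by simp
  have "(prv f ^^ f) i = prv f ((prv f ^^ (f - 1)) i)"
    by (subst f0) simp
  also have "\<dots> = i"
  proof (cases "f - 1 \<le> i")
    case True
    then have "i = f - 1" using i by simp
    then show ?thesis using i True prv_pow[OF i, of "f-1"] by (simp add: prv_zero)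
  next
    case False
    then show ?thesis using i prv_pow[OF i, of "f-1"] by (simp add: prv_pos)
  qed
  finally show ?thesis .
qed

lemma Suc_mod_prv: "j < f \<Longrightarrow> prv f (Suc j mod f) = j"
proof (cases "Suc j < f")
  case True
  then show ?thesis by (simp add: prv_pos)
next
  case False
  assume "j < f"
  then have "Suc j = f" using False by simp
  then show ?thesis by (simp add: prv_zero)
qed

locale sys =
  fixes p f :: nat and r :: "nat \<Rightarrow> nat" and J :: "nat set"
  assumes p2: "2 \<le> p" and f1: "1 \<le> f" and rb: "\<And>i. i < f \<Longrightarrow> 1 \<le> r i \<and> r i \<le> p"
    and Jf: "J \<subseteq> {..<f}"
begin

definition hh :: "nat \<Rightarrow> nat" where "hh i = (if i \<in> J then r i else 0)"

definition G0 :: "nat \<times> nat \<Rightarrow> (nat \<times> nat) option" where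
  "G0 n = (case n of (i,k) \<Rightarrow> if i < f \<and> r i - hh i \<le> k + hh i \<and> p dvd (k + hh i - (r i - hh i))
      then Some (prv f i, (k + hh i - (r i - hh i)) div p) else None)"

definition kap :: "nat \<Rightarrow> nat" where "kap j = (if j \<in> J \<and> r j = p then 0 else 1)"

definition R :: "nat \<Rightarrow> nat \<Rightarrow> nat \<Rightarrow> bool" where
  "R j k k' \<longleftrightarrow> (j \<in> J \<and> r j = p \<and> k = 0 \<and> k' = 1) \<or> (j \<in> J \<and> r j = p - 1 \<and> k = 1 \<and> k' = 1)
     \<or> (j \<notin> J \<and> r j = 1 \<and> k = 1 \<and> k' = 0)"

lemma edge: "G0 (j,k) = Some (j',k') \<Longrightarrow> j < f \<and> j' = prv f j \<and>
   (if j \<in> J then p dvd (k + r j) \<and> k' = (k + r j) div p else r j \<le> k \<and> p dvd (k - r j) \<and> k' = (k - r j) div p)"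
  by (auto simp: G0_def hh_def split: if_splits)

lemma edge_mult: "G0 (j,k) = Some (j',k') \<Longrightarrow> j < f \<and> j' = prv f j \<and>
   (if j \<in> J then k + r j = p * k' else r j \<le> k \<and> k - r j = p * k')"
  using edge[of j k j' k'] by (auto split: if_splits)

lemma edge_dec: assumes e: "G0 (j,k) = Some (j',k')" and k3: "3 \<le> k" shows "k' < k"
proof -
  note E = edge_mult[OF e]
  have rj: "1 \<le> r j" "r j \<le> p" using rb E by auto
  show ?thesis
  proof (cases "j \<in> J")
    case True
    then have eq: "k + r j = p * k'" using E by simp
    show ?thesis
    proof (rule ccontr)
      assume "\<not> k' < k"
      then have "p * k \<le> p * k'" by simp
      moreover have "p * k \<ge> 2 * k" using p2 by simp
      moreover have "p * k \<ge> p * 3" using k3 by simp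
      ultimately show False using eq rj p2 by linarith
    qed
  next
    case False
    then have "k - r j = p * k'" using E by simp
    moreover have "k' \<le> p * k'" using p2 by simp
    ultimately show ?thesis using rj k3 by linarith
  qed
qed

lemma edge_low: assumes e: "G0 (j,k) = Some (j',k')" and k2: "k \<le> 2" shows "k' \<le> 2"
proof -
  note E = edge_mult[OF e]
  have rj: "1 \<le> r j" "r j \<le> p" using rb E by auto
  show ?thesis
  proof (rule ccontr)
    assume "\<not> k' \<le> 2"
    then have a: "p * k' \<ge> p * 3" by simp
    show False
    proof (cases "j \<in> J")
      case True then show False using E rj p2 k2 a by simp
    next
      case False
      have "2 * 3 \<le> p * k'" using mult_le_mono[OF p2, of 3 k'] \<open>\<not> k' \<le> 2\<close> by simp
      moreover have "k - r j = p * k'" using E False by simp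
      ultimately show False using rj p2 k2 by linarith
    qed
  qed
qed

lemma edge_R: assumes e: "G0 (j,k) = Some (j',k')" and k1: "k \<le> 1" shows "R j k k'"
proof -
  note E = edge_mult[OF e]
  have rj: "1 \<le> r j" "r j \<le> p" using rb E by auto
  show ?thesis
  proof (cases "j \<in> J")
    case True
    then have eq: "k + r j = p * k'" using E by simp
    have "k' = 1"
    proof -
      have "k' \<noteq> 0"
      proof
        assume "k' = 0" then show False using eq rj by simp
      qed
      moreover have "\<not> k' \<ge> 2"
      proof
        assume "k' \<ge> 2"
        then have "p * k' \<ge> p * 2" by simp
        then show False using eq rj k1 p2 by linarith
      qed
      ultimately show ?thesis by linarith
    qed
    then show ?thesis using eq True k1 unfolding R_def by auto
  next
    case False
    then have "r j \<le> k" "k - r j = p * k'" using E by auto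
    then have "r j = 1" "k = 1" "k' = 0" using rj k1 p2 by auto
    then show ?thesis using False unfolding R_def by auto
  qed
qed

lemma R_kap: "R j k k' \<Longrightarrow> k = kap j \<and> k' \<le> 1"
  unfolding R_def kap_def using p2 by auto

lemma edge_22: assumes e: "G0 (j,2) = Some (j',2)" shows "p = 2 \<and> j \<in> J \<and> r j = 2"
proof -
  note E = edge_mult[OF e]
  have rj: "1 \<le> r j" "r j \<le> p" using rb E by auto
  show ?thesis
  proof (cases "j \<in> J")
    case True
    then have "2 + r j = p * 2" using E by simp
    then show ?thesis using rj True p2 by linarith
  next
    case False
    then have "2 - r j = p * 2" using E by simp
    then show ?thesis using rj p2 by linarith
  qed
qed

lemma edge_fstP: "G0 x = Some y \<Longrightarrow> fst x < f \<and> fst y = prv f (fst x)"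
  using edge[of "fst x" "snd x" "fst y" "snd y"] by simp
lemma edge_lowP: "G0 x = Some y \<Longrightarrow> snd x \<le> 2 \<Longrightarrow> snd y \<le> 2"
  using edge_low[of "fst x" "snd x" "fst y" "snd y"] by simp
lemma edge_decP: "G0 x = Some y \<Longrightarrow> 3 \<le> snd x \<Longrightarrow> snd y < snd x"
  using edge_dec[of "fst x" "snd x" "fst y" "snd y"] by simp
lemma edge_RP: "G0 x = Some y \<Longrightarrow> snd x \<le> 1 \<Longrightarrow> R (fst x) (snd x) (snd y)"
  using edge_R[of "fst x" "snd x" "fst y" "snd y"] by simp

lemma itr_idx: "itr G0 l n = Some v \<Longrightarrow> fst v = (prv f ^^ l) (fst n)"
proof (induction l arbitrary: n)
  case 0 then show ?case by simp
next
  case (Suc l)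
  then obtain m where m: "G0 n = Some m" "itr G0 l m = Some v" by (auto split: option.splits)
  have "fst m = prv f (fst n)" using edge_fstP m by simp
  then show ?case using Suc.IH[OF m(2)] by (simp add: funpow_Suc_right del: funpow.simps)
qed

lemma per_node: "itr G d v = Some v \<Longrightarrow> itr G t v = Some w \<Longrightarrow> itr G d w = Some w"
  using itr_add[of G t d v] itr_add[of G d t v] by (simp add: add.commute)

lemma per_all: assumes "itr G0 d v = Some v" "0 < d" shows "itr G0 t v \<noteq> None"
proof (induction t)
  case 0 then show ?case by simp
next
  case (Suc t)
  then obtain w where w: "itr G0 t v = Some w" by auto
  have pw: "itr G0 d w = Some w" using per_node[OF assms(1) w] .
  have "G0 w \<noteq> None"
  proof
    assume "G0 w = None"
    then have "itr G0 d w = None" using assms(2) by (cases d) auto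
    then show False using pw by simp
  qed
  then show ?case using w itr_Suc2[of G0 t v] by auto
qed

definition phi2 :: "nat \<times> nat \<Rightarrow> nat" where "phi2 x = max 2 (snd x)"

lemma phi_edge: "G0 x = Some y \<Longrightarrow> phi2 y \<le> phi2 x \<and> (3 \<le> snd x \<longrightarrow> phi2 y < phi2 x)"
  using edge_decP[of x y] edge_lowP[of x y]
  unfolding phi2_def by (cases "3 \<le> snd x") auto

lemma phi_chain: "itr G0 t x = Some y \<Longrightarrow> phi2 y \<le> phi2 x"
proof (induction t arbitrary: x)
  case 0 then show ?case by simp
next
  case (Suc t)
  then obtain m where m: "G0 x = Some m" "itr G0 t m = Some y" by (auto split: option.splits)
  then show ?case using Suc.IH[OF m(2)] phi_edge[OF m(1)] by linarith
qed

lemma per_low: assumes "itr G0 d v = Some v" "0 < d" shows "snd v \<le> 2"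
proof (rule ccontr)
  assume a: "\<not> snd v \<le> 2"
  obtain d' where d: "d = Suc d'" using assms(2) by (cases d) auto
  obtain w where w: "G0 v = Some w" "itr G0 d' w = Some v" using assms(1) d by (auto split: option.splits)
  have "phi2 v \<le> phi2 w" using phi_chain[OF w(2)] .
  moreover have "phi2 w < phi2 v" using phi_edge[OF w(1)] a by auto
  ultimately show False by simp
qed

lemma low1_chain: "itr G0 t x = Some y \<Longrightarrow> snd x \<le> 1 \<Longrightarrow> snd y \<le> 1"
proof (induction t arbitrary: x)
  case 0 then show ?case by simp
next
  case (Suc t)
  then obtain m where m: "G0 x = Some m" "itr G0 t m = Some y" by (auto split: option.splits)
  have "snd m \<le> 1" using R_kap edge_RP[OF m(1) Suc.prems(2)] by auto
  then show ?case using Suc.IH[OF m(2)] by simp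
qed

lemma per2: assumes "itr G0 d v = Some v" "0 < d" "snd v = 2"
  shows "\<exists>w. G0 v = Some w \<and> snd w = 2"
proof -
  obtain d' where d: "d = Suc d'" using assms(2) by (cases d) auto
  obtain w where w: "G0 v = Some w" "itr G0 d' w = Some v" using assms(1) d by (auto split: option.splits)
  have "snd w \<le> 2" using edge_lowP[OF w(1)] assms(3) by simp
  moreover have "\<not> snd w \<le> 1" using low1_chain[OF w(2)] assms(3) by auto
  ultimately show ?thesis using w by auto
qed

lemma per2_all: assumes "itr G0 d v = Some v" "0 < d" "snd v = 2"
  shows "itr G0 t v = Some w \<Longrightarrow> snd w = 2"
proof (induction t arbitrary: w)
  case 0 then show ?case using assms by simp
next
  case (Suc t)
  obtain w' where w': "itr G0 t v = Some w'" using Suc.prems itr_Suc2[of G0 t v] by (cases "itr G0 t v") auto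
  then have "G0 w' = Some w" using Suc.prems itr_Suc2[of G0 t v] by simp
  moreover have "snd w' = 2" using Suc.IH[OF w'] .
  moreover have "itr G0 d w' = Some w'" using per_node[OF assms(1) w'] .
  ultimately show ?case using per2[of d w'] assms(2) by auto
qed

lemma per_kap: assumes "itr G0 d v = Some v" "0 < d" "snd v \<le> 1"
  shows "snd v = kap (fst v)"
proof -
  obtain d' where d: "d = Suc d'" using assms(2) by (cases d) auto
  obtain w where w: "G0 v = Some w" using assms(1) d by (auto split: option.splits)
  show ?thesis using R_kap edge_RP[OF w assms(3)] by auto
qed

lemma per_f: assumes "itr G0 d v = Some v" "0 < d" "fst v < f" shows "itr G0 f v = Some v"
proof -
  obtain w where w: "itr G0 f v = Some w" using per_all[OF assms(1,2), of f] by auto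
  have fw: "fst w = fst v" using itr_idx[OF w] prv_pow_f[OF assms(3)] by simp
  have pw: "itr G0 d w = Some w" using per_node[OF assms(1) w] .
  have "snd v \<le> 2" using per_low[OF assms(1,2)] .
  then consider "snd v = 2" | "snd v \<le> 1" by linarith
  then have "snd w = snd v"
  proof cases
    case 1 then show ?thesis using per2_all[OF assms(1,2) 1 w] by simp
  next
    case 2
    then have "snd w \<le> 1" using low1_chain[OF w] by simp
    then show ?thesis using per_kap[OF pw assms(2)] per_kap[OF assms(1,2) 2] fw by simp
  qed
  then show ?thesis using w fw by (simp add: prod_eq_iff)
qed

lemma closure_low: "itr G0 t n = Some w \<Longrightarrow> fst n < f \<Longrightarrow> snd n \<le> 2 \<Longrightarrow> fst w < f \<and> snd w \<le> 2"
proof (induction t arbitrary: n)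
  case 0 then show ?case by simp
next
  case (Suc t)
  then obtain m where m: "G0 n = Some m" "itr G0 t m = Some w" by (auto split: option.splits)
  have "fst m < f" "snd m \<le> 2"
    using edge_fstP[OF m(1)] edge_lowP[OF m(1)] Suc.prems by (auto simp: prv_lt)
  then show ?case using Suc.IH[OF m(2)] by simp
qed

lemma fin0: "(\<exists>t. itr G0 t n = None) \<or> (\<exists>t u. itr G0 t n = Some u \<and> itr G0 f u = Some u)"
proof (induction "snd n" arbitrary: n rule: less_induct)
  case less
  show ?case
  proof (cases "G0 n")
    case None
    then have "itr G0 (Suc 0) n = None" by simp
    then show ?thesis by blast
  next
    case (Some m)
    have nf: "fst n < f" using edge_fstP[OF Some] by simp
    show ?thesis
    proof (cases "3 \<le> snd n")
      case True
      then have "snd m < snd n" using edge_decP[OF Some] by simp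
      from less[OF this]
      consider t where "itr G0 t m = None" | t u where "itr G0 t m = Some u" "itr G0 f u = Some u" by blast
      then show ?thesis
      proof cases
        case 1
        then have "itr G0 (Suc t) n = None" using Some by simp
        then show ?thesis by blast
      next
        case 2
        then have "itr G0 (Suc t) n = Some u" using Some by simp
        then show ?thesis using 2 by blast
      qed
    next
      case False
      then have n2: "snd n \<le> 2" by simp
      show ?thesis
      proof (cases "\<exists>t. itr G0 t n = None")
        case True then show ?thesis by blast
      next
        case False
        define g where "g t = the (itr G0 t n)" for t
        have gS: "itr G0 t n = Some (g t)" for t using False unfolding g_def by auto
        define S where "S = {..<f} \<times> {..(2::nat)}"
        have cardS: "card S = f * 3" unfolding S_def by (simp add: card_cartesian_product)
        have sub: "g ` {..3*f} \<subseteq> S"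
        proof (rule image_subsetI)
          fix t show "g t \<in> S" using closure_low[OF gS[of t] nf n2] unfolding S_def by (cases "g t") auto
        qed
        have "\<not> inj_on g {..3*f}"
        proof
          assume "inj_on g {..3*f}"
          then have "card (g ` {..3*f}) = Suc (3 * f)" by (simp add: card_image)
          moreover have "card (g ` {..3*f}) \<le> card S"
            using sub unfolding S_def by (intro card_mono) auto
          ultimately show False using cardS by simp
        qed
        then obtain s t where st: "s \<in> {..3*f}" "t \<in> {..3*f}" "s \<noteq> t" "g s = g t"
          unfolding inj_on_def by blast
        have main: "\<exists>t u. itr G0 t n = Some u \<and> itr G0 f u = Some u"
          if "s < t" "g s = g t" for s t
        proof -
          have "itr G0 t n = itr G0 (s + (t - s)) n" using that by simp
          also have "\<dots> = itr G0 (t - s) (g s)" using itr_add[of G0 s "t - s" n] gS[of s] by simp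
          finally have per: "itr G0 (t - s) (g s) = Some (g s)" using gS[of t] that by simp
          have "fst (g s) < f" using closure_low[OF gS nf n2] by blast
          then have "itr G0 f (g s) = Some (g s)" using per_f[OF per] that by simp
          then show ?thesis using gS[of s] by blast
        qed
        show ?thesis
        proof (cases "s < t")
          case True then show ?thesis using main st by blast
        next
          case False then have "t < s" using st by simp
          then show ?thesis using main st by metis
        qed
      qed
    qed
  qed
qed

lemma visits: assumes "itr G0 f u = Some u" "fst u < f" "j < f"
  shows "\<exists>l<f. \<exists>k. itr G0 l u = Some (j, k)"
proof -
  define i where "i = fst u"
  define l where "l = (if j \<le> i then i - j else f + i - j)"
  have lf: "l < f" unfolding l_def i_def using assms by auto
  obtain w where w: "itr G0 l u = Some w" using per_all[OF assms(1)] f1 by fastforce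
  have "fst w = (prv f ^^ l) i" using itr_idx[OF w] i_def by simp
  also have "\<dots> = j" using prv_pow[of i f l] lf assms unfolding l_def i_def by auto
  finally show ?thesis using lf w by (metis prod.collapse)
qed

lemma cyc_struct: assumes cy: "itr G0 f u = Some u" and uf: "fst u < f"
  shows "(p = 2 \<and> (\<forall>j<f. j \<in> J \<and> r j = 2) \<and> (\<forall>j<f. \<exists>l<f. itr G0 l u = Some (j,2)))
     \<or> ((\<forall>j<f. R j (kap j) (kap (prv f j))) \<and> (\<forall>j<f. \<exists>l<f. itr G0 l u = Some (j, kap j)))"
proof -
  have f0: "0 < f" using f1 by simp
  have "snd u \<le> 2" using per_low[OF cy f0] .
  then consider "snd u = 2" | "snd u \<le> 1" by linarith
  then show ?thesis
  proof cases
    case 1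
    have A: "\<exists>l<f. itr G0 l u = Some (j,2) \<and> G0 (j,2) \<noteq> None \<and> (\<forall>w. G0 (j,2) = Some w \<longrightarrow> snd w = 2)"
      if j: "j < f" for j
    proof -
      obtain l k where lk: "l < f" "itr G0 l u = Some (j,k)" using visits[OF cy uf j] by blast
      have k2: "k = 2" using per2_all[OF cy f0 1 lk(2)] by simp
      obtain w where w: "itr G0 (Suc l) u = Some w" using per_all[OF cy f0, of "Suc l"] by auto
      have Gw: "G0 (j,2) = Some w" using w lk k2 itr_Suc2[of G0 l u] by simp
      have "snd w = 2" using per2_all[OF cy f0 1 w] .
      then show ?thesis using lk k2 Gw by auto
    qed
    have "p = 2 \<and> j \<in> J \<and> r j = 2" if jf: "j < f" for j
    proof -
      have l: "G0 (j,2) \<noteq> None" "\<forall>w. G0 (j,2) = Some w \<longrightarrow> snd w = 2" using A[OF jf] by blast+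
      then obtain w where "G0 (j,2) = Some w" "snd w = 2" by auto
      then show ?thesis using edge_22[of j "fst w"] by (metis prod.collapse)
    qed
    then have "p = 2 \<and> (\<forall>j<f. j \<in> J \<and> r j = 2)" using f0 by blast
    then show ?thesis using A by blast
  next
    case 2
    have A: "\<exists>l<f. itr G0 l u = Some (j, kap j) \<and> R j (kap j) (kap (prv f j))" if j: "j < f" for j
    proof -
      obtain l k where lk: "l < f" "itr G0 l u = Some (j,k)" using visits[OF cy uf j] by blast
      have k1: "k \<le> 1" using low1_chain[OF lk(2)] 2 by simp
      have pk: "itr G0 f (j,k) = Some (j,k)" using per_node[OF cy lk(2)] .
      have kk: "k = kap j" using per_kap[OF pk f0] k1 by simp
      obtain w where w: "itr G0 (Suc l) u = Some w" using per_all[OF cy f0, of "Suc l"] by auto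
      have Gw: "G0 (j,k) = Some w" using w lk itr_Suc2[of G0 l u] by simp
      have fw: "fst w = prv f j" using edge[of j k "fst w" "snd w"] Gw by simp
      have w1: "snd w \<le> 1" using low1_chain[OF w] 2 by simp
      have pw: "itr G0 f w = Some w" using per_node[OF cy w] .
      have kw: "snd w = kap (fst w)" using per_kap[OF pw f0] w1 by simp
      have "R j k (snd w)" using edge_R[of j k "fst w" "snd w"] Gw k1 by simp
      then show ?thesis using kk kw fw lk by auto
    qed
    then show ?thesis by blast
  qed
qed

lemma cyc_prod: assumes cy: "itr G0 f u = Some u" and uf: "fst u < f" and w1: "\<And>j. j \<noteq> 0 \<Longrightarrow> w j = 1"
  shows "(\<Prod>l<f. w (fst (the (itr G0 l u)))) = (w 0 :: 'a::comm_monoid_mult)"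
proof -
  have f0: "0 < f" using f1 by simp
  define i where "i = fst u"
  have idx: "fst (the (itr G0 l u)) = (if l \<le> i then i - l else f + i - l)" if "l < f" for l
  proof -
    obtain v where v: "itr G0 l u = Some v" using per_all[OF cy f0, of l] by auto
    show ?thesis using itr_idx[OF v] prv_pow[of i f l] that uf v unfolding i_def by simp
  qed
  have i: "i \<in> {..<f}" using uf i_def by simp
  have "(\<Prod>l<f. w (fst (the (itr G0 l u)))) = w (fst (the (itr G0 i u))) * (\<Prod>l\<in>{..<f} - {i}. w (fst (the (itr G0 l u))))"
    using prod.remove[OF _ i] by simp
  also have "(\<Prod>l\<in>{..<f} - {i}. w (fst (the (itr G0 l u)))) = 1"
  proof (rule prod.neutral, intro ballI)
    fix l assume "l \<in> {..<f} - {i}"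
    then have "l < f" "l \<noteq> i" by auto
    then have "fst (the (itr G0 l u)) \<noteq> 0" using idx[of l] i by auto
    then show "w (fst (the (itr G0 l u))) = 1" using w1 by simp
  qed
  also have "fst (the (itr G0 i u)) = 0" using idx[of i] i by simp
  finally show ?thesis by simp
qed

lemma R_exc1: assumes "\<forall>j<f. R j (kap j) (kap (prv f j))"
  shows "r \<in> Pset p f \<and> J = {i. i < f \<and> r (prv f i) \<noteq> p}"
proof -
  have Rj: "R j (kap j) (kap (prv f j))" if "j < f" for j using assms that by blast
  have J1: "j \<in> J \<longleftrightarrow> r (prv f j) \<noteq> p" if j: "j < f" for j
  proof -
    have pj: "prv f j < f" using prv_lt[OF j] .
    show ?thesis using Rj[OF j] Rj[OF pj] p2 unfolding R_def kap_def by (auto split: if_splits)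
  qed
  have P: "r \<in> Pset p f"
    unfolding Pset_def
  proof (intro CollectI allI impI conjI)
    fix i assume i: "i < f"
    define j where "j = Suc i mod f"
    have jf: "j < f" unfolding j_def using i by simp
    have pj: "prv f j = i" unfolding j_def using Suc_mod_prv[OF i] .
    have Ri: "R i (kap i) (kap (prv f i))" using Rj[OF i] .
    have Rj': "R j (kap j) (kap i)" using Rj[OF jf] pj by simp
    show "r i \<in> {1, p - 1, p}" using Ri unfolding R_def by auto
    show "r i = p \<Longrightarrow> r (Suc i mod f) = 1"
      using Ri Rj' p2 unfolding j_def[symmetric] R_def kap_def by (auto split: if_splits)
    show "r i \<in> {1, p - 1} \<Longrightarrow> r (Suc i mod f) \<in> {p - 1, p}"
      using Ri Rj' p2 unfolding j_def[symmetric] R_def kap_def by (auto split: if_splits)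
  qed
  have "J = {i. i < f \<and> r (prv f i) \<noteq> p}" using J1 Jf by auto
  then show ?thesis using P by simp
qed

end



lemma frob_nth: "fps_nth (frob p g) n = (if p dvd n then fps_nth g (n div p) else 0)"
  by (simp add: frob_def)

lemma frob_one: "p > 0 \<Longrightarrow> frob p (1::'k::field fps) = 1"
  by (rule fps_ext) (auto simp: frob_nth elim!: dvdE)

lemma construct:
  fixes scale :: "'k::field fps \<Rightarrow> 'm::ab_group_add \<Rightarrow> 'm"
  assumes ext: "is_extension p f rA a rB b scale M phi iota prj" and p0: "p > 0"
  shows "\<exists>x0. \<forall>Y. \<exists>e fb. good_bases p f rA a rB b scale M phi iota e fb
     (\<lambda>i. x0 i - fps_const (coefi a i) * fps_X ^ rA i * Y i + fps_const (coefi b i) * fps_X ^ rB i * frob p (Y (prv f i)))"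
proof -
  note E = ext[unfolded is_extension_def]
  have E1: "module scale" using E by (rule conjunct1)
  note R1 = E[THEN conjunct2]
  have E2: "\<forall>i<f. module.subspace scale (M i)" using R1 by (rule conjunct1)
  note R2 = R1[THEN conjunct2]
  have E3: "\<forall>i<f. \<forall>x\<in>M (prv f i). phi i x \<in> M i" using R2 by (rule conjunct1)
  note R3 = R2[THEN conjunct2]
  have E4: "\<forall>i<f. \<forall>x\<in>M (prv f i). \<forall>y\<in>M (prv f i). phi i (x + y) = phi i x + phi i y" using R3 by (rule conjunct1)
  note R4 = R3[THEN conjunct2]
  have E5: "\<forall>i<f. \<forall>c. \<forall>x\<in>M (prv f i). phi i (scale c x) = scale (frob p c) (phi i x)" using R4 by (rule conjunct1)
  note R5 = R4[THEN conjunct2]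
  have E6: "\<forall>i<f. module_hom (*) scale (iota i) \<and> inj (iota i) \<and> range (iota i) \<subseteq> M i" using R5 by (rule conjunct1)
  note R6 = R5[THEN conjunct2]
  have E7: "\<forall>i<f. (\<forall>x\<in>M i. \<forall>y\<in>M i. prj i (x + y) = prj i x + prj i y) \<and>
            (\<forall>c. \<forall>x\<in>M i. prj i (scale c x) = c * prj i x) \<and>
            prj i ` M i = UNIV \<and> {x \<in> M i. prj i x = 0} = range (iota i)" using R6 by (rule conjunct1)
  note R7 = R6[THEN conjunct2]
  have E8: "\<forall>i<f. \<forall>g. phi i (iota (prv f i) g) = iota i (phiR p rB b i g)" using R7 by (rule conjunct1)
  have E9: "\<forall>i<f. \<forall>x\<in>M (prv f i). prj i (phi i x) = phiR p rA a i (prj (prv f i) x)" using R7 by (rule conjunct2)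
  interpret module scale by (rule E1)
  have subM: "\<And>i. i < f \<Longrightarrow> subspace (M i)" using E2 by blast
  have phiM: "\<And>i x. i < f \<Longrightarrow> x \<in> M (prv f i) \<Longrightarrow> phi i x \<in> M i" using E3 by blast
  have phiadd: "\<And>i x y. i < f \<Longrightarrow> x \<in> M (prv f i) \<Longrightarrow> y \<in> M (prv f i) \<Longrightarrow> phi i (x + y) = phi i x + phi i y"
    using E4 by blast
  have phiscale: "\<And>i c x. i < f \<Longrightarrow> x \<in> M (prv f i) \<Longrightarrow> phi i (scale c x) = scale (frob p c) (phi i x)"
    using E5 by blast
  have hom: "\<And>i. i < f \<Longrightarrow> module_hom (*) scale (iota i)" using E6 by blast
  have inj: "\<And>i. i < f \<Longrightarrow> inj (iota i)" using E6 by blast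
  have iotaM: "\<And>i g. i < f \<Longrightarrow> iota i g \<in> M i" using E6 by blast
  have prjadd: "\<And>i x y. i < f \<Longrightarrow> x \<in> M i \<Longrightarrow> y \<in> M i \<Longrightarrow> prj i (x + y) = prj i x + prj i y"
    using E7 by blast
  have prjscale: "\<And>i c x. i < f \<Longrightarrow> x \<in> M i \<Longrightarrow> prj i (scale c x) = c * prj i x" using E7 by blast
  have prjsurj: "\<And>i. i < f \<Longrightarrow> prj i ` M i = UNIV" using E7 by blast
  have ker: "\<And>i. i < f \<Longrightarrow> {x \<in> M i. prj i x = 0} = range (iota i)" using E7 by blast
  have phiiota: "\<And>i g. i < f \<Longrightarrow> phi i (iota (prv f i) g) = iota i (phiR p rB b i g)" using E8 by blast
  have prjphi: "\<And>i x. i < f \<Longrightarrow> x \<in> M (prv f i) \<Longrightarrow> prj i (phi i x) = phiR p rA a i (prj (prv f i) x)"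
    using E9 by blast
  define e where "e i = iota i 1" for i
  have iota_e: "iota i c = scale c (e i)" if "i < f" for i c
    using module_hom.scale[OF hom[OF that], of c 1] unfolding e_def by simp
  have eM: "e i \<in> M i" if "i < f" for i unfolding e_def using iotaM[OF that] .
  have prj_e: "prj i (scale c (e i)) = 0" if i: "i < f" for i c
  proof -
    have "iota i c \<in> range (iota i)" by (rule rangeI)
    then have "iota i c \<in> {x \<in> M i. prj i x = 0}" using ker[OF i] by simp
    then show ?thesis using iota_e[OF i, of c] by simp
  qed
  have prjdiff: "prj i (x - y) = prj i x - prj i y" if "i < f" "x \<in> M i" "y \<in> M i" for i x y
  proof -
    have "x - y \<in> M i" using subspace_diff[OF subM[OF that(1)] that(2,3)] .
    then have "prj i (x - y + y) = prj i (x - y) + prj i y" using prjadd that by blast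
    then show ?thesis by simp
  qed
  define fb0 where "fb0 i = (SOME m. m \<in> M i \<and> prj i m = 1)" for i
  have fb0: "fb0 i \<in> M i \<and> prj i (fb0 i) = 1" if "i < f" for i
  proof -
    have "1 \<in> prj i ` M i" using prjsurj[OF that] by simp
    then have "\<exists>m. m \<in> M i \<and> prj i m = 1" by auto
    then show ?thesis unfolding fb0_def by (rule someI_ex)
  qed
  define A where "A i = fps_const (coefi a i) * fps_X ^ rA i" for i
  define B where "B i = fps_const (coefi b i) * fps_X ^ rB i" for i
  define Zt where "Zt i = phi i (fb0 (prv f i)) - scale (A i) (fb0 i)" for i
  have Zker: "Zt i \<in> range (iota i)" if i: "i < f" for i
  proof -
    have pi: "prv f i < f" using prv_lt[OF i] .
    have m1: "phi i (fb0 (prv f i)) \<in> M i" using phiM[OF i] fb0[OF pi] by blast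
    have m2: "scale (A i) (fb0 i) \<in> M i" using subspace_scale[OF subM[OF i]] fb0[OF i] by blast
    have "Zt i \<in> M i" unfolding Zt_def using subspace_diff[OF subM[OF i] m1 m2] .
    moreover have "prj i (Zt i) = 0"
    proof -
      have "prj i (Zt i) = prj i (phi i (fb0 (prv f i))) - prj i (scale (A i) (fb0 i))"
        unfolding Zt_def using prjdiff[OF i m1 m2] .
      also have "prj i (phi i (fb0 (prv f i))) = A i"
        using prjphi[OF i] fb0[OF pi] frob_one[OF p0, where 'k='k] unfolding phiR_def A_def by simp
      also have "prj i (scale (A i) (fb0 i)) = A i" using prjscale[OF i] fb0[OF i] by simp
      finally show ?thesis by simp
    qed
    ultimately have "Zt i \<in> {x \<in> M i. prj i x = 0}" by simp
    then show ?thesis unfolding ker[OF i] .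
  qed
  define x0 where "x0 i = (SOME g. Zt i = iota i g)" for i
  have phifb0: "phi i (fb0 (prv f i)) = scale (A i) (fb0 i) + scale (x0 i) (e i)" if i: "i < f" for i
  proof -
    obtain g where "Zt i = iota i g" using Zker[OF i] by (rule rangeE)
    then have "\<exists>g. Zt i = iota i g" by blast
    then have "Zt i = iota i (x0 i)" unfolding x0_def by (rule someI_ex)
    then have "phi i (fb0 (prv f i)) - scale (A i) (fb0 i) = scale (x0 i) (e i)"
      using iota_e[OF i] unfolding Zt_def by simp
    then have "phi i (fb0 (prv f i)) = scale (x0 i) (e i) + scale (A i) (fb0 i)" by (simp add: diff_eq_eq)
    then show ?thesis by (simp add: add.commute)
  qed
  have phie: "phi i (e (prv f i)) = scale (B i) (e i)" if i: "i < f" for i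
  proof -
    have "phi i (e (prv f i)) = iota i (phiR p rB b i 1)" using phiiota[OF i, of 1] unfolding e_def .
    also have "phiR p rB b i 1 = B i" using frob_one[OF p0, where 'k='k] unfolding phiR_def B_def by simp
    finally show ?thesis using iota_e[OF i] by simp
  qed
  show ?thesis
  proof (rule exI[of _ x0], rule allI)
    fix Y :: "nat \<Rightarrow> 'k fps"
    define fb where "fb i = fb0 i + scale (Y i) (e i)" for i
    define x where "x i = x0 i - fps_const (coefi a i) * fps_X ^ rA i * Y i + fps_const (coefi b i) * fps_X ^ rB i * frob p (Y (prv f i))" for i
    have fbM: "fb i \<in> M i" if i: "i < f" for i
      unfolding fb_def using subspace_add[OF subM[OF i]] subspace_scale[OF subM[OF i]] fb0[OF i] eM[OF i] by blast
    have prjfb: "prj i (fb i) = 1" if i: "i < f" for i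
    proof -
      have "scale (Y i) (e i) \<in> M i" using subspace_scale[OF subM[OF i]] eM[OF i] by blast
      then show ?thesis unfolding fb_def using prjadd[OF i] fb0[OF i] prj_e[OF i] by simp
    qed
    have "good_bases p f rA a rB b scale M phi iota e fb x"
      unfolding good_bases_def
    proof (intro allI impI conjI)
      fix i assume i: "i < f"
      have pi: "prv f i < f" using prv_lt[OF i] .
      show "e i \<in> M i" using eM[OF i] .
      show "fb i \<in> M i" using fbM[OF i] .
      show "range (iota i) = range (\<lambda>c. scale c (e i))" using iota_e[OF i] by auto
      show "phi i (e (prv f i)) = scale (fps_const (coefi b i) * fps_X ^ rB i) (e i)"
        using phie[OF i] unfolding B_def .
      show "phi i (fb (prv f i)) = scale (fps_const (coefi a i) * fps_X ^ rA i) (fb i) + scale (x i) (e i)"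
      proof -
        have s1: "scale (Y (prv f i)) (e (prv f i)) \<in> M (prv f i)"
          using subspace_scale[OF subM[OF pi]] eM[OF pi] by blast
        have "phi i (fb (prv f i)) = phi i (fb0 (prv f i)) + phi i (scale (Y (prv f i)) (e (prv f i)))"
          unfolding fb_def using phiadd[OF i] fb0[OF pi] s1 by blast
        also have "phi i (scale (Y (prv f i)) (e (prv f i))) = scale (frob p (Y (prv f i)) * B i) (e i)"
          using phiscale[OF i eM[OF pi]] phie[OF i] by simp
        finally have "phi i (fb (prv f i)) = scale (A i) (fb0 i) + (scale (x0 i) (e i) + scale (frob p (Y (prv f i)) * B i) (e i))"
          using phifb0[OF i] by (simp add: add.assoc)
        also have "scale (x0 i) (e i) + scale (frob p (Y (prv f i)) * B i) (e i) = scale (A i * Y i) (e i) + scale (x i) (e i)"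
        proof -
          have "x0 i + frob p (Y (prv f i)) * B i = A i * Y i + x i"
            unfolding x_def A_def B_def by (simp add: algebra_simps)
          then show ?thesis by (metis scale_left_distrib)
        qed
        finally show ?thesis unfolding fb_def A_def by (simp add: algebra_simps)
      qed
      show "\<forall>m\<in>M i. \<exists>!cd. m = scale (fst cd) (e i) + scale (snd cd) (fb i)"
      proof
        fix m assume m: "m \<in> M i"
        have rep: "d = prj i m \<and> iota i c = m - scale (prj i m) (fb i)"
          if h: "m = scale c (e i) + scale d (fb i)" for c d
        proof -
          have a1: "scale c (e i) \<in> M i" using subspace_scale[OF subM[OF i]] eM[OF i] by blast
          have a2: "scale d (fb i) \<in> M i" using subspace_scale[OF subM[OF i]] fbM[OF i] by blast
          have "prj i m = prj i (scale c (e i)) + prj i (scale d (fb i))" using h prjadd[OF i a1 a2] by simp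
          also have "\<dots> = d" using prj_e[OF i] prjscale[OF i fbM[OF i]] prjfb[OF i] by simp
          finally have "d = prj i m" by simp
          then show ?thesis using h iota_e[OF i] by simp
        qed
        have a2: "scale (prj i m) (fb i) \<in> M i" using subspace_scale[OF subM[OF i]] fbM[OF i] by blast
        have dm: "m - scale (prj i m) (fb i) \<in> M i" using subspace_diff[OF subM[OF i] m a2] .
        have "prj i (m - scale (prj i m) (fb i)) = 0"
          using prjdiff[OF i m a2] prjscale[OF i fbM[OF i]] prjfb[OF i] by simp
        then obtain c where c: "m - scale (prj i m) (fb i) = iota i c" using ker[OF i] dm by blast
        have ex: "m = scale c (e i) + scale (prj i m) (fb i)" using c iota_e[OF i] by (simp add: algebra_simps)
        show "\<exists>!cd. m = scale (fst cd) (e i) + scale (snd cd) (fb i)"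
        proof (rule ex1I[of _ "(c, prj i m)"])
          show "m = scale (fst (c, prj i m)) (e i) + scale (snd (c, prj i m)) (fb i)" using ex by simp
        next
          fix cd assume h: "m = scale (fst cd) (e i) + scale (snd cd) (fb i)"
          from rep[OF h] have "snd cd = prj i m" "iota i (fst cd) = iota i c" using c by auto
          then show "cd = (c, prj i m)" using inj[OF i] by (simp add: inj_eq prod_eq_iff)
        qed
      qed
    qed
    then show "\<exists>e fb. good_bases p f rA a rB b scale M phi iota e fb
     (\<lambda>i. x0 i - fps_const (coefi a i) * fps_X ^ rA i * Y i + fps_const (coefi b i) * fps_X ^ rB i * frob p (Y (prv f i)))"
      unfolding x_def by blast
  qed
qed




lemma Suc_prv_mod: "i < f \<Longrightarrow> Suc (prv f i) mod f = i"
proof (cases "i = 0")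
  case True
  assume "i < f"
  then show ?thesis using True by (simp add: prv_zero)
next
  case False
  assume "i < f"
  then show ?thesis using False by (simp add: prv_pos)
qed

lemma xcoef:
  fixes x0 :: "'k::field fps" and y :: "nat \<times> nat \<Rightarrow> 'k"
  shows "fps_nth (x0 - fps_const A * fps_X ^ hA * Abs_fps (\<lambda>k. y (i,k)) + fps_const B * fps_X ^ hB * frob p (Abs_fps (\<lambda>k. y (j,k)))) n
   = fps_nth x0 n - A * (if n < hA then 0 else y (i, n - hA)) + B * (if n < hB then 0 else (if p dvd (n - hB) then y (j, (n - hB) div p) else 0))"
  by (simp add: mult.assoc fps_X_power_mult_nth frob_nth)

theorem mainTheorem8:
  fixes p f :: nat and r :: "nat \<Rightarrow> nat" and J :: "nat set"
    and a b :: "'k::{field, finite}"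
    and scale :: "'k fps \<Rightarrow> 'm::ab_group_add \<Rightarrow> 'm"
    and M :: "nat \<Rightarrow> 'm set" and phi :: "nat \<Rightarrow> 'm \<Rightarrow> 'm"
    and iota :: "nat \<Rightarrow> 'k fps \<Rightarrow> 'm" and prj :: "nat \<Rightarrow> 'm \<Rightarrow> 'k fps"
  defines "h \<equiv> (\<lambda>i. if i \<in> J then r i else 0)"
  defines "exc1 \<equiv> r \<in> Pset p f \<and> J = {i. i < f \<and> r (prv f i) \<noteq> p} \<and> a = b"
  defines "exc2 \<equiv> p = 2 \<and> (\<forall>i<f. r i = 2) \<and> J = {..<f} \<and> a = b"
  assumes "prime p" and "CHAR('k) = p" and "f \<ge> 1"
    and "\<exists>d. card (UNIV :: 'k set) = p ^ (f * d)"
    and "\<forall>i<f. 1 \<le> r i \<and> r i \<le> p"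
    and "J \<subseteq> {..<f}"
    and "a \<noteq> 0" and "b \<noteq> 0"
    and "is_extension p f h a (\<lambda>i. r i - h i) b scale M phi iota prj"
  shows "(\<not> exc1 \<and> \<not> exc2 \<longrightarrow>
           (\<exists>e fb x. good_bases p f h a (\<lambda>i. r i - h i) b scale M phi iota e fb x
              \<and> (\<forall>i<f. deg_less (x i) (h i))))
       \<and> ((exc1 \<or> exc2) \<longrightarrow> (\<forall>i0\<in>J.
           (\<exists>e fb x q c. good_bases p f h a (\<lambda>i. r i - h i) b scale M phi iota e fb x
              \<and> (\<forall>i<f. i \<noteq> i0 \<longrightarrow> deg_less (x i) (h i))
              \<and> deg_less q (h i0)
              \<and> x i0 = q + fps_const c * fps_X ^ (if exc1 then p else 4))))"
proof -
  note extA = assms(12)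
  have p2: "2 \<le> p" using \<open>prime p\<close> prime_ge_2_nat by blast
  have f1: "1 \<le> f" using assms(6) .
  have f0: "0 < f" using f1 by simp
  have Jf: "J \<subseteq> {..<f}" using assms(9) .
  have rb: "\<And>i. i < f \<Longrightarrow> 1 \<le> r i \<and> r i \<le> p" using assms(8) by blast
  interpret S: sys p f r J using p2 f1 rb Jf by unfold_locales auto
  have hh: "S.hh = h" unfolding h_def by (rule ext) (simp add: S.hh_def)
  have A0: "coefi a i \<noteq> 0" for i using \<open>a \<noteq> 0\<close> by (simp add: coefi_def)
  obtain x0 where X0: "\<forall>Y. \<exists>e fb. good_bases p f h a (\<lambda>i. r i - h i) b scale M phi iota e fb
     (\<lambda>i. x0 i - fps_const (coefi a i) * fps_X ^ h i * Y i + fps_const (coefi b i) * fps_X ^ (r i - h i) * frob p (Y (prv f i)))"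
    using construct[OF extA] p2 by auto
  define cc where "cc n = fps_nth (x0 (fst n)) (snd n + h (fst n)) / coefi a (fst n)" for n :: "nat \<times> nat"
  define \<beta> where "\<beta> n = coefi b (fst n) / coefi a (fst n)" for n :: "nat \<times> nat"
  define XX where "XX y i = x0 i - fps_const (coefi a i) * fps_X ^ h i * Abs_fps (\<lambda>k. y (i,k))
      + fps_const (coefi b i) * fps_X ^ (r i - h i) * frob p (Abs_fps (\<lambda>k. y (prv f i, k)))" for y :: "nat \<times> nat \<Rightarrow> 'k" and i
  have good: "\<exists>e fb. good_bases p f h a (\<lambda>i. r i - h i) b scale M phi iota e fb (XX y)" for y
    unfolding XX_def using X0[rule_format, of "\<lambda>i. Abs_fps (\<lambda>k. y (i,k))"] .
  have vanish: "fps_nth (XX y i) n = 0"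
    if i: "i < f" and hn: "h i \<le> n"
      and eq: "y (i, n - h i) = cc (i, n - h i) + \<beta> (i, n - h i) * (case S.G0 (i, n - h i) of None \<Rightarrow> 0 | Some m \<Rightarrow> y m)"
    for y i n
  proof -
    define k where "k = n - h i"
    have n: "n = k + h i" unfolding k_def using hn by simp
    define T where "T = (if n < r i - h i then 0 else (if p dvd (n - (r i - h i)) then y (prv f i, (n - (r i - h i)) div p) else 0))"
    have G: "(case S.G0 (i, k) of None \<Rightarrow> 0 | Some m \<Rightarrow> y m) = T"
      unfolding S.G0_def T_def hh using i n by auto
    have "fps_nth (XX y i) n = fps_nth (x0 i) n - coefi a i * y (i, k) + coefi b i * T"
      unfolding XX_def xcoef T_def using hn k_def by simp
    also have "y (i, k) = cc (i,k) + \<beta> (i,k) * T" using eq G unfolding k_def by simp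
    finally show ?thesis unfolding cc_def \<beta>_def using A0[of i] n by (simp add: field_simps)
  qed
  have fstf: "fst u < f" if "itr G f u = Some u" "\<And>n. G n \<noteq> None \<Longrightarrow> G n = S.G0 n" for G u
  proof -
    obtain f' where "f = Suc f'" using f0 by (cases f) auto
    then have "itr G (Suc f') u = Some u" using that(1) by simp
    then obtain w where "G u = Some w" by (cases "G u") auto
    then have "S.G0 u = Some w" using that(2) by fastforce
    then show ?thesis using S.edge_fstP by blast
  qed
  show ?thesis
  proof (intro conjI impI)
    assume nexc: "\<not> exc1 \<and> \<not> exc2"
    have lam: "(\<Prod>l<f. \<beta> (the (itr S.G0 l u))) \<noteq> 1" if cy: "itr S.G0 f u = Some u" for u
    proof
      assume one: "(\<Prod>l<f. \<beta> (the (itr S.G0 l u))) = 1"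
      have uf: "fst u < f" using fstf[OF cy] by blast
      have "(\<Prod>l<f. (\<lambda>j. coefi b j / coefi a j) (fst (the (itr S.G0 l u)))) = coefi b 0 / coefi a 0"
        by (rule S.cyc_prod[OF cy uf]) (simp add: coefi_def)
      then have "b / a = 1" using one unfolding \<beta>_def by (simp add: coefi_def)
      then have ab: "a = b" using \<open>a \<noteq> 0\<close> by (simp add: field_simps)
      from S.cyc_struct[OF cy uf] show False
      proof
        assume "p = 2 \<and> (\<forall>j<f. j \<in> J \<and> r j = 2) \<and> (\<forall>j<f. \<exists>l<f. itr S.G0 l u = Some (j, 2))"
        then have "exc2" unfolding exc2_def using ab Jf by auto
        then show False using nexc by simp
      next
        assume "(\<forall>j<f. S.R j (S.kap j) (S.kap (prv f j))) \<and> (\<forall>j<f. \<exists>l<f. itr S.G0 l u = Some (j, S.kap j))"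
        then have "exc1" unfolding exc1_def using S.R_exc1 ab by blast
        then show False using nexc by simp
      qed
    qed
    obtain y where y: "\<forall>n. y n = cc n + \<beta> n * (case S.G0 n of None \<Rightarrow> 0 | Some m \<Rightarrow> y m)"
      using solver[of f S.G0 \<beta> cc] f0 S.fin0 lam by blast
    obtain e fb where eb: "good_bases p f h a (\<lambda>i. r i - h i) b scale M phi iota e fb (XX y)" using good by blast
    have "\<forall>i<f. deg_less (XX y i) (h i)" unfolding deg_less_def using vanish y by blast
    then show "\<exists>e fb x. good_bases p f h a (\<lambda>i. r i - h i) b scale M phi iota e fb x \<and> (\<forall>i<f. deg_less (x i) (h i))"
      using eb by blast
  next
    assume exc: "exc1 \<or> exc2"
    show "\<forall>i0\<in>J. \<exists>e fb x q c. good_bases p f h a (\<lambda>i. r i - h i) b scale M phi iota e fb x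
              \<and> (\<forall>i<f. i \<noteq> i0 \<longrightarrow> deg_less (x i) (h i))
              \<and> deg_less q (h i0)
              \<and> x i0 = q + fps_const c * fps_X ^ (if exc1 then p else 4)"
    proof
      fix i0 assume i0: "i0 \<in> J"
      have i0f: "i0 < f" using i0 Jf by auto
      have hi0: "h i0 = r i0" using i0 unfolding h_def by simp
      define N where "N = (if exc1 then p else (4::nat))"
      define k0 where "k0 = (if exc1 then (if r i0 = p then 0 else 1) else (2::nat))"
      have kN: "k0 + h i0 = N"
      proof (cases exc1)
        case True
        then have P: "r \<in> Pset p f" and JJ: "J = {i. i < f \<and> r (prv f i) \<noteq> p}" unfolding exc1_def by auto
        define j where "j = prv f i0"
        have jf: "j < f" unfolding j_def using prv_lt[OF i0f] .
        have "r j \<noteq> p" using i0 JJ unfolding j_def by auto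
        moreover have "r j \<in> {1, p - 1, p}" "r j \<in> {1, p - 1} \<longrightarrow> r (Suc j mod f) \<in> {p - 1, p}"
          using P jf unfolding Pset_def by blast+
        moreover have "Suc j mod f = i0" unfolding j_def using Suc_prv_mod[OF i0f] .
        ultimately have "r i0 \<in> {p - 1, p}" by auto
        then show ?thesis unfolding k0_def N_def using True hi0 p2 by auto
      next
        case False
        then have "exc2" using exc by simp
        then have "r i0 = 2" unfolding exc2_def using i0f by auto
        then show ?thesis unfolding k0_def N_def using False hi0 by simp
      qed
      define G' where "G' = S.G0((i0,k0) := None)"
      have sub: "G' n \<noteq> None \<Longrightarrow> G' n = S.G0 n" for n unfolding G'_def by (cases "n = (i0,k0)") auto
      have key: "itr G' t m \<noteq> None \<Longrightarrow> itr G' t m = itr S.G0 t m" for t m by (rule itr_sub[OF sub])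
      have nocyc: "itr G' f u \<noteq> Some u" for u
      proof
        assume cy': "itr G' f u = Some u"
        have cy: "itr S.G0 f u = Some u" using key[of f u] cy' by simp
        have uf: "fst u < f" using fstf[OF cy' sub] by blast
        have avoid: "itr S.G0 l u \<noteq> Some (i0,k0)" if l: "l < f" for l
        proof
          assume a: "itr S.G0 l u = Some (i0,k0)"
          have "itr G' l u \<noteq> None" using itr_prefix[of G' f u l] cy' l by simp
          then have "itr G' l u = Some (i0,k0)" using key[of l u] a by simp
          then have "itr G' (Suc l) u = None" using itr_Suc2[of G' l u] by (simp add: G'_def)
          then show False using itr_prefix[of G' f u "Suc l"] cy' l by simp
        qed
        from S.cyc_struct[OF cy uf] show False
        proof
          assume br: "p = 2 \<and> (\<forall>j<f. j \<in> J \<and> r j = 2) \<and> (\<forall>j<f. \<exists>l<f. itr S.G0 l u = Some (j, 2))"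
          show False
          proof (cases exc1)
            case True
            then have JJ: "J = {i. i < f \<and> r (prv f i) \<noteq> p}" unfolding exc1_def by auto
            have "0 \<in> J" using br f0 by blast
            then have "r (prv f 0) \<noteq> p" using JJ by auto
            moreover have "prv f 0 < f" using prv_lt[OF f0] .
            ultimately show False using br by auto
          next
            case False
            then have "k0 = 2" unfolding k0_def by simp
            then show False using br i0f avoid by blast
          qed
        next
          assume br: "(\<forall>j<f. S.R j (S.kap j) (S.kap (prv f j))) \<and> (\<forall>j<f. \<exists>l<f. itr S.G0 l u = Some (j, S.kap j))"
          show False
          proof (cases exc1)
            case True
            then have "k0 = S.kap i0" unfolding k0_def S.kap_def using i0 by simp
            then show False using br i0f avoid by blast
          next
            case False
            then have e2: "exc2" using exc by simp
            then have p2': "p = 2" and r2: "\<forall>i<f. r i = 2" and JJ: "J = {..<f}" unfolding exc2_def by auto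
            have "S.kap j = 0" if "j < f" for j using that p2' r2 JJ unfolding S.kap_def by simp
            then have "S.R i0 0 0" using br i0f prv_lt[OF i0f] by metis
            then show False unfolding S.R_def by simp
          qed
        qed
      qed
      have fin': "(\<exists>t. itr G' t n = None) \<or> (\<exists>t u. itr G' t n = Some u \<and> itr G' f u = Some u)" for n
        using fin_sub[OF sub S.fin0] .
      obtain y where y: "\<forall>n. y n = cc n + \<beta> n * (case G' n of None \<Rightarrow> 0 | Some m \<Rightarrow> y m)"
        using solver[of f G' \<beta> cc] f0 fin' nocyc by blast
      obtain e fb where eb: "good_bases p f h a (\<lambda>i. r i - h i) b scale M phi iota e fb (XX y)" using good by blast
      have van: "fps_nth (XX y i) n = 0" if "i < f" "h i \<le> n" "(i, n - h i) \<noteq> (i0, k0)" for i n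
      proof -
        have "G' (i, n - h i) = S.G0 (i, n - h i)" unfolding G'_def by (rule fun_upd_other[OF that(3)])
        then show ?thesis using vanish[OF that(1,2)] y by metis
      qed
      define q where "q = Abs_fps (\<lambda>n. if n < h i0 then fps_nth (XX y i0) n else 0)"
      define c where "c = fps_nth (XX y i0) N"
      have dq: "deg_less q (h i0)" unfolding deg_less_def q_def by simp
      have xq: "XX y i0 = q + fps_const c * fps_X ^ N"
      proof (rule fps_ext)
        fix n
        show "fps_nth (XX y i0) n = fps_nth (q + fps_const c * fps_X ^ N) n"
        proof (cases "n < h i0")
          case True
          then show ?thesis unfolding q_def using kN by auto
        next
          case False
          show ?thesis
          proof (cases "n = N")
            case True
            then show ?thesis unfolding q_def c_def using False by simp
          next
            case nN: False
            have "(i0, n - h i0) \<noteq> (i0, k0)" using kN nN False by auto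
            then show ?thesis using van[OF i0f] False nN unfolding q_def by simp
          qed
        qed
      qed
      have "\<forall>i<f. i \<noteq> i0 \<longrightarrow> deg_less (XX y i) (h i)" unfolding deg_less_def using van by auto
      then show "\<exists>e fb x q c. good_bases p f h a (\<lambda>i. r i - h i) b scale M phi iota e fb x
              \<and> (\<forall>i<f. i \<noteq> i0 \<longrightarrow> deg_less (x i) (h i))
              \<and> deg_less q (h i0)
              \<and> x i0 = q + fps_const c * fps_X ^ (if exc1 then p else 4)"
        using eb dq xq unfolding N_def by blast
    qed
  qed
qed


end
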